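(* In the setting of $N$ classical particles of equal mass $m$ and charge $q$ with Hamiltonian $H(\mathbf X,\mathbf P)=\frac1{2m}\sum_{i=1}^N|\mathbf p_i-q\boldsymbol A(\mathbf x_i)|^2$ for a smooth vector potential $\boldsymbol A:\mathbb R^3\to\mathbb R^3$, let $\mathcal M_m\in O(3)$ with $\mathcal M_m^2=I$ and let $\mathcal M$ act as $(\mathbf x_i,\mathbf p_i)\mapsto(\mathcal M_m\mathbf x_i,-\mathcal M_m\mathbf p_i)$ for every $i$ (block diagonal on $\mathbb R^{3N}$ with identical $3\times3$ blocks $\mathcal M_m$). Then $\mathcal M$ yields time reversal invariance if and only if there is a smooth $G:\mathbb R^3\to\mathbb R$ with $$\mathcal M_m\boldsymbol A(\mathcal M_m\mathbf x)=-\boldsymbol A(\mathbf x)-\nabla G(\mathbf x)\quad\text{for all }\mathbf x\in\mathbb R^3,$$ i.e. $\mathcal M_m\boldsymbol A(\mathcal M_m\,\cdot)\in[-\boldsymbol A]$.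
   Context: $\mathcal M$ yields time reversal invariance if there is a smooth $G:\mathbb R^3\to\mathbb R$ with $H(\mathcal M\Gamma)=\frac1{2m}\sum_i|\mathbf p_i-q(\boldsymbol A(\mathbf x_i)+\nabla G(\mathbf x_i))|^2$ for all $\Gamma=(\mathbf x_i,\mathbf p_i)_i$. $[\boldsymbol A]$ denotes the gauge class $\{\boldsymbol A+\nabla G\}$. *)

theory Defs
  imports "HOL-Analysis.Analysis"
begin

fun Ck :: "nat \<Rightarrow> ('a::euclidean_space \<Rightarrow> 'b::real_normed_vector) \<Rightarrow> bool" where
  "Ck 0 f = continuous_on UNIV f"
| "Ck (Suc k) f = (\<exists>f'. (\<forall>x. (f has_derivative f' x) (at x)) \<and> (\<forall>v. Ck k (\<lambda>x. f' x v)))"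

definition smooth :: "('a::euclidean_space \<Rightarrow> 'b::real_normed_vector) \<Rightarrow> bool" where
  "smooth f \<longleftrightarrow> (\<forall>k. Ck k f)"

definition grad :: "(real^3 \<Rightarrow> real) \<Rightarrow> real^3 \<Rightarrow> real^3" where
  "grad G x = (\<chi> i. frechet_derivative G (at x) (axis i 1))"

text \<open>Phase space point: positions x i and momenta p i, particles i < N.\<close>
definition hamiltonian ::
  "real \<Rightarrow> real \<Rightarrow> (real^3 \<Rightarrow> real^3) \<Rightarrow> nat \<Rightarrow> (nat \<Rightarrow> real^3) \<Rightarrow> (nat \<Rightarrow> real^3) \<Rightarrow> real" where
  "hamiltonian m q A N x p = (1 / (2 * m)) * (\<Sum>i<N. (norm (p i - q *\<^sub>R A (x i)))\<^sup>2)"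

definition Mact :: "real^3^3 \<Rightarrow> (nat \<Rightarrow> real^3) \<times> (nat \<Rightarrow> real^3) \<Rightarrow> (nat \<Rightarrow> real^3) \<times> (nat \<Rightarrow> real^3)" where
  "Mact Mm \<Gamma> = ((\<lambda>i. Mm *v fst \<Gamma> i), (\<lambda>i. - (Mm *v snd \<Gamma> i)))"

definition yields_TRI :: "real \<Rightarrow> real \<Rightarrow> (real^3 \<Rightarrow> real^3) \<Rightarrow> nat \<Rightarrow> real^3^3 \<Rightarrow> bool" where
  "yields_TRI m q A N Mm \<longleftrightarrow>
     (\<exists>G :: real^3 \<Rightarrow> real. smooth G \<and>
        (\<forall>x p. hamiltonian m q A N (fst (Mact Mm (x, p))) (snd (Mact Mm (x, p)))
               = (1 / (2 * m)) * (\<Sum>i<N. (norm (p i - q *\<^sub>R (A (x i) + grad G (x i))))\<^sup>2)))"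

end

theory Submission
  imports Defs
begin

lemma norm_orth:
  fixes Mm :: "real^3^3"
  assumes "orthogonal_matrix Mm"
  shows "norm (Mm *v v) = norm v"
proof -
  have "orthogonal_transformation (\<lambda>x. Mm *v x)"
    using assms by (simp add: orthogonal_transformation_matrix matrix_vector_mul_linear)
  then show ?thesis by (simp add: orthogonal_transformation_def norm_eq_sqrt_inner)
qed

lemma ham_M:
  fixes Mm :: "real^3^3"
  assumes "orthogonal_matrix Mm" and "Mm ** Mm = mat 1"
  shows "hamiltonian m q A N (fst (Mact Mm (x, p))) (snd (Mact Mm (x, p)))
       = (1 / (2 * m)) * (\<Sum>i<N. (norm (p i + q *\<^sub>R (Mm *v A (Mm *v x i))))\<^sup>2)"
proof -
  have "\<And>i. - (Mm *v p i) - q *\<^sub>R A (Mm *v x i) = - (Mm *v (p i + q *\<^sub>R (Mm *v A (Mm *v x i))))"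
  proof -
    fix i
    have "Mm *v (Mm *v A (Mm *v x i)) = A (Mm *v x i)"
      using assms(2) by (simp add: matrix_vector_mul_assoc)
    then show "- (Mm *v p i) - q *\<^sub>R A (Mm *v x i) = - (Mm *v (p i + q *\<^sub>R (Mm *v A (Mm *v x i))))"
      by (simp only: matrix_vector_right_distrib matrix_vector_mult_scaleR minus_add_distrib diff_conv_add_uminus)
  qed
  then have "\<And>i. norm (- (Mm *v p i) - q *\<^sub>R A (Mm *v x i)) = norm (p i + q *\<^sub>R (Mm *v A (Mm *v x i)))"
    using norm_orth[OF assms(1)] by (metis norm_minus_cancel)
  then show ?thesis by (simp add: hamiltonian_def Mact_def)
qed

theorem mainTheorem11:
  fixes m q :: real and N :: nat and A :: "real^3 \<Rightarrow> real^3" and Mm :: "real^3^3"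
  assumes "m > 0" and "q \<noteq> 0" and "N \<ge> 1"
    and "smooth A"
    and "orthogonal_matrix Mm" and "Mm ** Mm = mat 1"
  shows "yields_TRI m q A N Mm \<longleftrightarrow>
         (\<exists>G :: real^3 \<Rightarrow> real. smooth G \<and>
            (\<forall>x. Mm *v A (Mm *v x) = - A x - grad G x))"
proof
  assume "yields_TRI m q A N Mm"
  then obtain G where sG: "smooth G" and H: "\<forall>x p. hamiltonian m q A N (fst (Mact Mm (x, p))) (snd (Mact Mm (x, p)))
               = (1 / (2 * m)) * (\<Sum>i<N. (norm (p i - q *\<^sub>R (A (x i) + grad G (x i))))\<^sup>2)"
    unfolding yields_TRI_def by blast
  have "\<forall>y. Mm *v A (Mm *v y) = - A y - grad G y"
  proof
    fix y
    define B where "B = Mm *v A (Mm *v y)"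
    define C where "C = A y + grad G y"
    have e: "(1 / (2 * m)) * (\<Sum>i<N. (norm ((- q *\<^sub>R B) + q *\<^sub>R B))\<^sup>2)
       = (1 / (2 * m)) * (\<Sum>i<N. (norm ((- q *\<^sub>R B) - q *\<^sub>R C))\<^sup>2)"
      using H[rule_format, of "\<lambda>i. y" "\<lambda>i. - q *\<^sub>R B"] ham_M[OF assms(5,6)]
      unfolding B_def C_def by simp
    then have "real N * (norm ((- q *\<^sub>R B) - q *\<^sub>R C))\<^sup>2 = 0"
      using assms(1) by simp
    then have "(- q *\<^sub>R B) - q *\<^sub>R C = 0" using assms(3) by simp
    then have "q *\<^sub>R (B + C) = 0" by (simp add: scaleR_add_right) (metis add.commute eq_neg_iff_add_eq_0 scaleR_minus_left)
    then have "B + C = 0" using assms(2) by simp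
    then show "Mm *v A (Mm *v y) = - A y - grad G y"
      unfolding B_def C_def by (simp add: algebra_simps eq_neg_iff_add_eq_0)
  qed
  with sG show "\<exists>G :: real^3 \<Rightarrow> real. smooth G \<and> (\<forall>x. Mm *v A (Mm *v x) = - A x - grad G x)"
    by blast
next
  assume "\<exists>G :: real^3 \<Rightarrow> real. smooth G \<and> (\<forall>x. Mm *v A (Mm *v x) = - A x - grad G x)"
  then obtain G where sG: "smooth G" and E: "\<forall>x. Mm *v A (Mm *v x) = - A x - grad G x" by blast
  show "yields_TRI m q A N Mm"
    unfolding yields_TRI_def
  proof (intro exI conjI allI)
    show "smooth G" by fact
    fix x p
    show "hamiltonian m q A N (fst (Mact Mm (x, p))) (snd (Mact Mm (x, p)))
               = (1 / (2 * m)) * (\<Sum>i<N. (norm (p i - q *\<^sub>R (A (x i) + grad G (x i))))\<^sup>2)"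
      unfolding ham_M[OF assms(5,6)]
    proof -
      have "\<And>i. p i + q *\<^sub>R (Mm *v A (Mm *v x i)) = p i - q *\<^sub>R (A (x i) + grad G (x i))"
        using E by (simp only: scaleR_add_right scaleR_right_diff_distrib scaleR_minus_right diff_minus_eq_add diff_add_eq_diff_diff_swap diff_conv_add_uminus minus_add_distrib add.assoc)
      then show "1 / (2 * m) * (\<Sum>i<N. (norm (p i + q *\<^sub>R (Mm *v A (Mm *v x i))))\<^sup>2) =
          1 / (2 * m) * (\<Sum>i<N. (norm (p i - q *\<^sub>R (A (x i) + grad G (x i))))\<^sup>2)" by simp
    qed
  qed
qed

end
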